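(* Let $\mathcal{X}_1,\mathcal{X}_2$ be non-empty sets, $\mathcal{B}_i\subseteq\mathcal{P}(\mathcal{X}_i)\setminus\{\emptyset\}$, and $\underline{P}_i$ a coherent conditional lower prevision on $\mathcal{C}_i\subseteq\mathcal{C}(\mathcal{X}_i)$ with natural extension $\underline{E}_i$ to $\mathcal{C}(\mathcal{X}_i)$, for $i\in\{1,2\}$. Let $\{i,j\}=\{1,2\}$. Then for any $f_i\in\mathcal{G}(\mathcal{X}_i)$, any non-empty $B_i\subseteq\mathcal{X}_i$ and any $B_j\in\mathcal{B}_j$, $$(\underline{P}_1\otimes\underline{P}_2)(f_i\vert B_i\cap B_j)=(\underline{P}_1\otimes\underline{P}_2)(f_i\vert B_i)=\underline{E}_i(f_i\vert B_i).$$
   Context: Gambles on a non-empty set $\mathcal{X}$ are bounded real functions; $\mathcal{G}(\mathcal{X})$ is the set of gambles, $\mathcal{G}_{>0}(\mathcal{X})$ the non-negative non-zero gambles, $\mathbb{I}_A$ the indicator of $A$. For $\mathcal{A}\subseteq\mathcal{G}(\mathcal{X})$: $\mathrm{posi}(\mathcal{A}):=\{\sum_{i=1}^n\lambda_if_i\colon n\in\mathbb{N},\lambda_i>0,f_i\in\mathcal{A}\}$, $\mathcal{E}(\mathcal{A}):=\mathrm{posi}(\mathcal{A}\cup\mathcal{G}_{>0}(\mathcal{X}))$. A coherent set of desirable gambles $\mathcal{D}\subseteq\mathcal{G}(\mathcal{X})$ satisfies: (D1) $f\geq0,f\neq0\Rightarrow f\in\mathcal{D}$; (D2) $f\in\mathcal{D},\lambda>0\Rightarrow\lambda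 f\in\mathcal{D}$; (D3) $f,g\in\mathcal{D}\Rightarrow f+g\in\mathcal{D}$; (D4) $f\leq0\Rightarrow f\notin\mathcal{D}$. $\mathcal{C}(\mathcal{X}):=\mathcal{G}(\mathcal{X})\times(\mathcal{P}(\mathcal{X})\setminus\{\emptyset\})$; a conditional lower prevision on $\mathcal{C}\subseteq\mathcal{C}(\mathcal{X})$ is a map $(f,B)\mapsto\underline{P}(f\vert B)\in\mathbb{R}\cup\{\pm\infty\}$. For $\mathcal{D}\subseteq\mathcal{G}(\mathcal{X})$, $\underline{P}_{\mathcal{D}}(f\vert B):=\sup\{\mu\in\mathbb{R}\colon[f-\mu]\mathbb{I}_B\in\mathcal{D}\}$. $\underline{P}$ is coherent if $\underline{P}=\underline{P}_{\mathcal{D}}$ on its domain for some coherent set of desirable gambles $\mathcal{D}$. For coherent $\underline{P}$ on $\mathcal{C}$, $\mathcal{E}(\underline{P}):=\mathcal{E}(\{[f-\mu]\mathbb{I}_B\colon(f,B)\in\mathcal{C},\mu<\underline{P}(f\vert B)\})$ and its natural extension is $\underline{E}(f\vert B):=\underline{P}_{\mathcal{E}(\underline{P})}(f\vert B)$, $(f,B)\in\mathcal{C}(\mathcal{X})$. Gambles on $\mathcal{X}_i$ are identified with their cylindrical extensions to $\mathcal{X}_1\times\mathcal{X}_2$, events $B\subseteq\mathcal{X}_1$ with $B\times\mathcal{X}_2$ and $B\subseteq\mathcal{X}_2$ with $\mathcal{X}_1\times B$ (so $B_i\cap B_j$ is a rectangle in $\mathcal{X}_1\times\mathcal{X}_2$).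 For coherent sets of desirable gambles $\mathcal{D}_1,\mathcal{D}_2$: $\mathcal{D}_1\otimes\mathcal{D}_2:=\mathcal{E}(\mathcal{A}_{1\to2}\cup\mathcal{A}_{2\to1})$, $\mathcal{A}_{1\to2}:=\{f_2(X_2)\mathbb{I}_{B_1}(X_1)\colon f_2\in\mathcal{D}_2,B_1\in\mathcal{B}_1\cup\{\mathcal{X}_1\}\}$, $\mathcal{A}_{2\to1}:=\{f_1(X_1)\mathbb{I}_{B_2}(X_2)\colon f_1\in\mathcal{D}_1,B_2\in\mathcal{B}_2\cup\{\mathcal{X}_2\}\}$. Then $(\underline{P}_1\otimes\underline{P}_2)(f\vert B):=\underline{P}_{\mathcal{D}}(f\vert B)$ for $(f,B)\in\mathcal{C}(\mathcal{X}_1\times\mathcal{X}_2)$ with $\mathcal{D}=\mathcal{E}(\underline{P}_1)\otimes\mathcal{E}(\underline{P}_2)$. *)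

theory Defs
  imports Main "HOL-Library.Extended_Real"
begin

definition gamble :: "('a \<Rightarrow> real) \<Rightarrow> bool" where
  "gamble f \<longleftrightarrow> bdd_above (range f) \<and> bdd_below (range f)"

definition gambles :: "('a \<Rightarrow> real) set" where
  "gambles = {f. gamble f}"

definition pos_gambles :: "('a \<Rightarrow> real) set" where
  "pos_gambles = {f. gamble f \<and> (\<forall>x. f x \<ge> 0) \<and> f \<noteq> (\<lambda>x. 0)}"

definition posi :: "('a \<Rightarrow> real) set \<Rightarrow> ('a \<Rightarrow> real) set" where
  "posi A = {g. \<exists>n::nat. n \<ge> 1 \<and> (\<exists>lam f. (\<forall>i<n. lam i > (0::real) \<and> f i \<in> A)
                 \<and> g = (\<lambda>x. \<Sum>i<n. lam i * f i x))}"

definition extend_D :: "('a \<Rightarrow> real) set \<Rightarrow> ('a \<Rightarrow> real) set" where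
  "extend_D A = posi (A \<union> pos_gambles)"

definition coherent_D :: "('a \<Rightarrow> real) set \<Rightarrow> bool" where
  "coherent_D D \<longleftrightarrow> D \<subseteq> gambles
     \<and> (\<forall>f. gamble f \<and> (\<forall>x. f x \<ge> 0) \<and> f \<noteq> (\<lambda>x. 0) \<longrightarrow> f \<in> D)
     \<and> (\<forall>f\<in>D. \<forall>lam::real. lam > 0 \<longrightarrow> (\<lambda>x. lam * f x) \<in> D)
     \<and> (\<forall>f\<in>D. \<forall>g\<in>D. (\<lambda>x. f x + g x) \<in> D)
     \<and> (\<forall>f. (\<forall>x. f x \<le> 0) \<longrightarrow> f \<notin> D)"

text \<open>\<open>\<C>(\<X>)\<close>: gambles paired with non-empty conditioning events.\<close>
definition cond_pairs :: "(('a \<Rightarrow> real) \<times> 'a set) set" where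
  "cond_pairs = {(f, B). gamble f \<and> B \<noteq> {}}"

definition cut :: "('a \<Rightarrow> real) \<Rightarrow> real \<Rightarrow> 'a set \<Rightarrow> 'a \<Rightarrow> real" where
  "cut f \<mu> B = (\<lambda>x. (f x - \<mu>) * (if x \<in> B then 1 else 0))"

definition lp_of :: "('a \<Rightarrow> real) set \<Rightarrow> ('a \<Rightarrow> real) \<Rightarrow> 'a set \<Rightarrow> ereal" where
  "lp_of D f B = Sup (ereal ` {\<mu>. cut f \<mu> B \<in> D})"

text \<open>A conditional lower prevision on domain C is a map
  \<open>P :: gamble \<Rightarrow> event \<Rightarrow> ereal\<close> (only its values on C matter).\<close>
definition coherent_lp :: "(('a \<Rightarrow> real) \<times> 'a set) set \<Rightarrow> (('a \<Rightarrow> real) \<Rightarrow> 'a set \<Rightarrow> ereal) \<Rightarrow> bool" where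
  "coherent_lp C P \<longleftrightarrow> (\<exists>D. coherent_D D \<and> (\<forall>(f, B)\<in>C. P f B = lp_of D f B))"

definition E_of_lp :: "(('a \<Rightarrow> real) \<times> 'a set) set \<Rightarrow> (('a \<Rightarrow> real) \<Rightarrow> 'a set \<Rightarrow> ereal) \<Rightarrow> ('a \<Rightarrow> real) set" where
  "E_of_lp C P = extend_D {cut f \<mu> B | f B \<mu>. (f, B) \<in> C \<and> ereal \<mu> < P f B}"

definition nat_ext :: "(('a \<Rightarrow> real) \<times> 'a set) set \<Rightarrow> (('a \<Rightarrow> real) \<Rightarrow> 'a set \<Rightarrow> ereal) \<Rightarrow> ('a \<Rightarrow> real) \<Rightarrow> 'a set \<Rightarrow> ereal" where
  "nat_ext C P f B = lp_of (E_of_lp C P) f B"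

definition A12 :: "'a set set \<Rightarrow> ('b \<Rightarrow> real) set \<Rightarrow> ('a \<times> 'b \<Rightarrow> real) set" where
  "A12 Bs1 D2 = {(\<lambda>z. f2 (snd z) * (if fst z \<in> B1 then 1 else 0)) | f2 B1. f2 \<in> D2 \<and> B1 \<in> Bs1 \<union> {UNIV}}"

definition A21 :: "'b set set \<Rightarrow> ('a \<Rightarrow> real) set \<Rightarrow> ('a \<times> 'b \<Rightarrow> real) set" where
  "A21 Bs2 D1 = {(\<lambda>z. f1 (fst z) * (if snd z \<in> B2 then 1 else 0)) | f1 B2. f1 \<in> D1 \<and> B2 \<in> Bs2 \<union> {UNIV}}"

definition indep_prod :: "'a set set \<Rightarrow> 'b set set \<Rightarrow> ('a \<Rightarrow> real) set \<Rightarrow> ('b \<Rightarrow> real) set \<Rightarrow> ('a \<times> 'b \<Rightarrow> real) set" where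
  "indep_prod Bs1 Bs2 D1 D2 = extend_D (A12 Bs1 D2 \<union> A21 Bs2 D1)"

definition prod_lp ::
  "'a set set \<Rightarrow> 'b set set \<Rightarrow> (('a \<Rightarrow> real) \<times> 'a set) set \<Rightarrow> (('a \<Rightarrow> real) \<Rightarrow> 'a set \<Rightarrow> ereal)
   \<Rightarrow> (('b \<Rightarrow> real) \<times> 'b set) set \<Rightarrow> (('b \<Rightarrow> real) \<Rightarrow> 'b set \<Rightarrow> ereal)
   \<Rightarrow> ('a \<times> 'b \<Rightarrow> real) \<Rightarrow> ('a \<times> 'b) set \<Rightarrow> ereal" where
  "prod_lp Bs1 Bs2 C1 P1 C2 P2 f B = lp_of (indep_prod Bs1 Bs2 (E_of_lp C1 P1) (E_of_lp C2 P2)) f B"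

end

theory Submission imports Defs begin

lemma gamble_iff: "gamble f \<longleftrightarrow> (\<exists>M. \<forall>x. \<bar>f x\<bar> \<le> M)"
proof
  assume "gamble f"
  then obtain a b where "\<forall>x. f x \<le> a" "\<forall>x. b \<le> f x"
    unfolding gamble_def bdd_above_def bdd_below_def by auto
  then have "\<forall>x. \<bar>f x\<bar> \<le> max \<bar>a\<bar> \<bar>b\<bar>" by (smt (verit) abs_le_iff)
  then show "\<exists>M. \<forall>x. \<bar>f x\<bar> \<le> M" by blast
next
  assume "\<exists>M. \<forall>x. \<bar>f x\<bar> \<le> M"
  then obtain M where "\<forall>x. \<bar>f x\<bar> \<le> M" by blast
  then have "\<forall>x. f x \<le> M" "\<forall>x. -M \<le> f x" by (smt (verit))+
  then show "gamble f" unfolding gamble_def bdd_above_def bdd_below_def by auto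
qed

lemma posiD: "g \<in> posi A \<Longrightarrow> \<exists>(n::nat) lam f. n \<ge> 1 \<and> (\<forall>i<n. lam i > (0::real) \<and> f i \<in> A) \<and> g = (\<lambda>x. \<Sum>i<n. lam i * f i x)"
  unfolding posi_def by blast

lemma posiI: "(n::nat) \<ge> 1 \<Longrightarrow> (\<forall>i<n. lam i > (0::real) \<and> f i \<in> A) \<Longrightarrow> g = (\<lambda>x. \<Sum>i<n. lam i * f i x) \<Longrightarrow> g \<in> posi A"
  unfolding posi_def by blast

lemma sum_split_add: "(\<Sum>i<n+m. g i) = (\<Sum>i<n. g i) + (\<Sum>i<m. g (n+i::nat)) " for g :: "nat \<Rightarrow> real"
  by (induction m) (auto simp: add.assoc)

lemma posi_add:
  fixes a b :: "'x \<Rightarrow> real"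
  assumes "a \<in> posi A" "b \<in> posi A"
  shows "(\<lambda>x. a x + b x) \<in> posi A"
proof -
  from assms(1) obtain n :: nat and lam f where n: "n \<ge> 1" "\<forall>i<n. lam i > (0::real) \<and> f i \<in> A"
    "a = (\<lambda>x. \<Sum>i<n. lam i * f i x)" using posiD[OF assms(1)] by blast
  from assms(2) obtain m :: nat and lam' f' where m: "m \<ge> 1" "\<forall>i<m. lam' i > (0::real) \<and> f' i \<in> A"
    "b = (\<lambda>x. \<Sum>i<m. lam' i * f' i x)" using posiD[OF assms(2)] by blast
  define L where "L i = (if i < n then lam i else lam' (i - n))" for i
  define F where "F i = (if i < n then f i else f' (i - n))" for i
  have "\<forall>i<n+m. L i > 0 \<and> F i \<in> A" using n m by (auto simp: L_def F_def)
  moreover have "(\<lambda>x. a x + b x) = (\<lambda>x. \<Sum>i<n+m. L i * F i x)"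
  proof
    fix x
    have "(\<Sum>i<n+m. L i * F i x) = (\<Sum>i<n. L i * F i x) + (\<Sum>i<m. L (n+i) * F (n+i) x)"
      by (rule sum_split_add)
    also have "\<dots> = a x + b x" using n m by (simp add: L_def F_def)
    finally show "a x + b x = (\<Sum>i<n+m. L i * F i x)" by simp
  qed
  ultimately show ?thesis using n by (intro posiI[of "n+m" L F]) auto
qed

lemma posi_scale:
  fixes a :: "'x \<Rightarrow> real"
  assumes "a \<in> posi A" "c > 0"
  shows "(\<lambda>x. c * a x) \<in> posi A"
proof -
  from posiD[OF assms(1)] obtain n :: nat and lam f where n: "n \<ge> 1" "\<forall>i<n. lam i > (0::real) \<and> f i \<in> A"
    "a = (\<lambda>x. \<Sum>i<n. lam i * f i x)" by blast
  show ?thesis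
    by (rule posiI[of n "\<lambda>i. c * lam i" f]) (use n assms in \<open>auto simp: sum_distrib_left mult.assoc\<close>)
qed

lemma posi_base: "a \<in> A \<Longrightarrow> a \<in> posi A"
  by (rule posiI[of 1 "\<lambda>i. 1" "\<lambda>i. a"]) auto

lemma coh_sum:
  assumes "coherent_D D" "finite I" "I \<noteq> {}" "\<forall>i\<in>I. c i > (0::real) \<and> G i \<in> D"
  shows "(\<lambda>x. \<Sum>i\<in>I. c i * G i x) \<in> D"
  using assms(2,3,4)
proof (induction I rule: finite_ne_induct)
  case (singleton i)
  then show ?case using assms(1) unfolding coherent_D_def by auto
next
  case (insert i I)
  have a: "(\<lambda>x. c i * G i x) \<in> D" using insert assms(1) unfolding coherent_D_def by auto
  have b: "(\<lambda>x. \<Sum>i\<in>I. c i * G i x) \<in> D" using insert by auto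
  have add: "\<forall>f\<in>D. \<forall>g\<in>D. (\<lambda>x. f x + g x) \<in> D" using assms(1) unfolding coherent_D_def by blast
  show ?case using add[rule_format, OF a b] insert by simp
qed

lemma posi_sub: "coherent_D D \<Longrightarrow> A \<subseteq> D \<Longrightarrow> posi A \<subseteq> D"
proof
  fix g assume D: "coherent_D D" and A: "A \<subseteq> D" and g: "g \<in> posi A"
  from posiD[OF g] obtain n :: nat and lam f where n: "n \<ge> 1" "\<forall>i<n. lam i > (0::real) \<and> f i \<in> A"
    "g = (\<lambda>x. \<Sum>i<n. lam i * f i x)" by blast
  show "g \<in> D" unfolding n(3)
  proof (rule coh_sum[OF D])
    show "{..<n} \<noteq> {}" using n by (metis lessThan_iff less_le_trans zero_less_one empty_iff)
  qed (use n A in auto)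
qed

lemma pos_gambles_D: "coherent_D D \<Longrightarrow> pos_gambles \<subseteq> D"
  unfolding coherent_D_def pos_gambles_def by auto

lemma coherent_E:
  assumes "coherent_lp C P" "C \<subseteq> cond_pairs"
  shows "coherent_D (E_of_lp C P)"
proof -
  from assms(1) obtain D where D: "coherent_D D" "\<forall>(f, B)\<in>C. P f B = lp_of D f B"
    unfolding coherent_lp_def by blast
  define A where "A = {cut f \<mu> B | f B \<mu>. (f, B) \<in> C \<and> ereal \<mu> < P f B}"
  have AD: "A \<subseteq> D"
  proof
    fix g assume "g \<in> A"
    then obtain f B \<mu> where g: "g = cut f \<mu> B" "(f, B) \<in> C" "ereal \<mu> < P f B"
      unfolding A_def by blast
    have fB: "gamble f" "B \<noteq> {}" using g(2) assms(2) unfolding cond_pairs_def by auto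
    have "ereal \<mu> < Sup (ereal ` {\<mu>. cut f \<mu> B \<in> D})"
      using g D(2) unfolding lp_of_def by auto
    then obtain \<mu>' where mu': "cut f \<mu>' B \<in> D" "\<mu> < \<mu>'"
      by (auto simp: less_Sup_iff)
    define p where "p = (\<lambda>x. (\<mu>' - \<mu>) * (if x \<in> B then 1 else (0::real)))"
    have "gamble p" unfolding gamble_iff p_def
      by (rule exI[of _ "\<bar>\<mu>' - \<mu>\<bar>"]) auto
    moreover have "\<forall>x. p x \<ge> 0" using mu' by (auto simp: p_def)
    moreover have "p \<noteq> (\<lambda>x. 0)"
    proof
      assume "p = (\<lambda>x. 0)"
      moreover obtain b where "b \<in> B" using fB by auto
      ultimately have "p b = 0" by simp
      then show False using \<open>b \<in> B\<close> mu' by (simp add: p_def)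
    qed
    ultimately have "p \<in> D" using D(1) unfolding coherent_D_def by blast
    then have "(\<lambda>x. cut f \<mu>' B x + p x) \<in> D" using mu'(1) D(1) unfolding coherent_D_def by blast
    moreover have "(\<lambda>x. cut f \<mu>' B x + p x) = g"
      unfolding g(1) p_def cut_def by (auto simp: algebra_simps)
    ultimately show "g \<in> D" by simp
  qed
  have ED: "E_of_lp C P \<subseteq> D"
    unfolding E_of_lp_def extend_D_def A_def[symmetric]
    by (rule posi_sub[OF D(1)]) (use AD pos_gambles_D[OF D(1)] in auto)
  show ?thesis
    unfolding coherent_D_def
  proof (intro conjI allI impI ballI)
    show "E_of_lp C P \<subseteq> gambles" using ED D(1) unfolding coherent_D_def by blast
  next
    fix f :: "'a \<Rightarrow> real" assume "gamble f \<and> (\<forall>x. 0 \<le> f x) \<and> f \<noteq> (\<lambda>x. 0)"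
    then have "f \<in> pos_gambles" unfolding pos_gambles_def by auto
    then show "f \<in> E_of_lp C P" unfolding E_of_lp_def extend_D_def by (intro posi_base) auto
  next
    fix f :: "'a \<Rightarrow> real" and lam :: real assume "f \<in> E_of_lp C P" "0 < lam"
    then show "(\<lambda>x. lam * f x) \<in> E_of_lp C P" unfolding E_of_lp_def extend_D_def by (rule posi_scale)
  next
    fix f g :: "'a \<Rightarrow> real" assume "f \<in> E_of_lp C P" "g \<in> E_of_lp C P"
    then show "(\<lambda>x. f x + g x) \<in> E_of_lp C P" unfolding E_of_lp_def extend_D_def by (rule posi_add)
  next
    fix f :: "'a \<Rightarrow> real" assume "\<forall>x. f x \<le> 0"
    then have "f \<notin> D" using D(1) unfolding coherent_D_def by blast
    then show "f \<notin> E_of_lp C P" using ED by blast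
  qed
qed

lemma coh_posI: "coherent_D D \<Longrightarrow> gamble f \<Longrightarrow> \<forall>x. 0 \<le> f x \<Longrightarrow> f \<noteq> (\<lambda>x. 0) \<Longrightarrow> f \<in> D"
  unfolding coherent_D_def by blast

lemma coh_addI: "coherent_D D \<Longrightarrow> f \<in> D \<Longrightarrow> g \<in> D \<Longrightarrow> (\<lambda>x. f x + g x) \<in> D"
  unfolding coherent_D_def by blast

lemma coh_scaleI: "coherent_D D \<Longrightarrow> f \<in> D \<Longrightarrow> c > 0 \<Longrightarrow> (\<lambda>x. c * f x) \<in> D"
  unfolding coherent_D_def by blast

lemma coh_gamble: "coherent_D D \<Longrightarrow> f \<in> D \<Longrightarrow> gamble f"
  unfolding coherent_D_def gambles_def by blast


inductive_set cone0 :: "(nat \<Rightarrow> real) set \<Rightarrow> (nat \<Rightarrow> real) set" for V where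
  zero: "(\<lambda>i. 0) \<in> cone0 V"
| step: "u \<in> cone0 V \<Longrightarrow> v \<in> V \<Longrightarrow> c \<ge> 0 \<Longrightarrow> (\<lambda>i. u i + c * v i) \<in> cone0 V"

lemma cone0_add: "w \<in> cone0 V \<Longrightarrow> u \<in> cone0 V \<Longrightarrow> (\<lambda>i. u i + w i) \<in> cone0 V"
proof (induction w rule: cone0.induct)
  case zero
  then show ?case by simp
next
  case (step w v c)
  have "(\<lambda>i. (u i + w i) + c * v i) \<in> cone0 V" using step by (intro cone0.step) auto
  then show ?case by (simp add: add.assoc)
qed

lemma cone0_scale: "u \<in> cone0 V \<Longrightarrow> c \<ge> 0 \<Longrightarrow> (\<lambda>i. c * u i) \<in> cone0 V"
proof (induction u rule: cone0.induct)
  case zero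
  then show ?case using cone0.zero by simp
next
  case (step u v d)
  have "(\<lambda>i. c * u i + (c * d) * v i) \<in> cone0 V" using step by (intro cone0.step) auto
  then show ?case by (simp add: algebra_simps)
qed

lemma cone0_gen: "v \<in> V \<Longrightarrow> v \<in> cone0 V"
proof -
  assume "v \<in> V"
  then have "(\<lambda>i. 0 + 1 * v i) \<in> cone0 V" by (intro cone0.step cone0.zero) auto
  then show ?thesis by simp
qed

lemma cone0_trans: "u \<in> cone0 V' \<Longrightarrow> V' \<subseteq> cone0 V \<Longrightarrow> u \<in> cone0 V"
proof (induction u rule: cone0.induct)
  case zero
  show ?case by (rule cone0.zero)
next
  case (step u v c)
  then have "(\<lambda>i. c * v i) \<in> cone0 V" by (intro cone0_scale) auto
  then show ?case using step cone0_add by blast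
qed

lemma cone0_coord: "u \<in> cone0 V \<Longrightarrow> \<forall>v\<in>V. v m \<ge> 0 \<Longrightarrow> u m \<ge> 0"
  by (induction u rule: cone0.induct) auto

lemma gordan:
  "(\<forall>lam. (\<forall>i<m. lam i \<ge> 0) \<and> (\<exists>i<m. lam i > 0) \<longrightarrow> (\<exists>v\<in>V. (\<Sum>i<m. lam i * v i) > 0))
    \<Longrightarrow> \<exists>u\<in>cone0 V. \<forall>i<m. u i > 0"
proof (induction m arbitrary: V)
  case 0
  then show ?case using cone0.zero by blast
next
  case (Suc m)
  note P = Suc.prems
  obtain v0 where v0: "v0 \<in> V" "v0 m > 0"
  proof -
    have "\<exists>v\<in>V. (\<Sum>i<Suc m. (if i = m then 1 else 0) * v i) > 0"
      using P[rule_format, of "\<lambda>i. if i = m then 1 else 0"] by auto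
    then show ?thesis using that by auto
  qed
  define V' where "V' = {v\<in>V. v m \<ge> 0} \<union>
     {(\<lambda>i. (- w m) * v i + v m * w i) | v w. v \<in> V \<and> v m > 0 \<and> w \<in> V \<and> w m < 0}"
  have V'sub: "V' \<subseteq> cone0 V"
  proof
    fix z assume "z \<in> V'"
    then consider "z \<in> V" | v w where "v \<in> V" "v m > 0" "w \<in> V" "w m < 0"
        "z = (\<lambda>i. (- w m) * v i + v m * w i)"
      unfolding V'_def by blast
    then show "z \<in> cone0 V"
    proof cases
      case 1
      then show ?thesis by (rule cone0_gen)
    next
      case 2
      have "(\<lambda>i. (- w m) * v i) \<in> cone0 V" using 2 by (intro cone0_scale cone0_gen) auto
      moreover have "(\<lambda>i. v m * w i) \<in> cone0 V" using 2 by (intro cone0_scale cone0_gen) auto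
      ultimately show ?thesis using cone0_add 2 by blast
    qed
  qed
  have V'nn: "\<forall>v\<in>V'. v m \<ge> 0"
    unfolding V'_def by (auto simp: algebra_simps)
  have "\<exists>u\<in>cone0 V'. \<forall>i<m. u i > 0"
  proof (rule Suc.IH, intro allI impI)
    fix lam :: "nat \<Rightarrow> real" assume lam: "(\<forall>i<m. 0 \<le> lam i) \<and> (\<exists>i<m. 0 < lam i)"
    show "\<exists>v\<in>V'. 0 < (\<Sum>i<m. lam i * v i)"
    proof (rule ccontr)
      assume "\<not> ?thesis"
      then have neg: "\<forall>v\<in>V'. (\<Sum>i<m. lam i * v i) \<le> 0" by force
      define Lf where "Lf v = (\<Sum>i<m. lam i * v i)" for v :: "nat \<Rightarrow> real"
      define S where "S = {Lf w / (- w m) | w. w \<in> V \<and> w m < 0}"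
      have Lpos: "Lf v \<le> 0" if "v \<in> V" "v m > 0" for v
        using neg that unfolding Lf_def V'_def by auto
      have bound: "s \<le> - Lf v / v m" if "s \<in> S" "v \<in> V" "v m > 0" for s v
      proof -
        from that(1) obtain w where w: "w \<in> V" "w m < 0" "s = Lf w / (- w m)" unfolding S_def by blast
        define z where "z = (\<lambda>i. (- w m) * v i + v m * w i)"
        have "z \<in> V'" unfolding V'_def z_def using w that by blast
        then have "Lf z \<le> 0" using neg unfolding Lf_def by auto
        moreover have "Lf z = (\<Sum>i<m. (- w m) * (lam i * v i) + v m * (lam i * w i))"
          unfolding Lf_def z_def by (intro sum.cong) (auto simp: algebra_simps)
        moreover have "\<dots> = (- w m) * Lf v + v m * Lf w"
          unfolding Lf_def by (simp only: sum.distrib sum_distrib_left)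
        ultimately have ineq: "(- w m) * Lf v + v m * Lf w \<le> 0" by simp
        have sw: "s * w m = - Lf w" using w by (simp add: field_simps)
        have prod: "(s * v m + Lf v) * w m = (s * w m) * v m + Lf v * w m" by (simp add: algebra_simps)
        have "(s * v m + Lf v) * w m \<ge> 0" using ineq unfolding prod sw by (simp add: algebra_simps)
        then have le: "s * v m + Lf v \<le> 0"
        proof -
          assume a: "(s * v m + Lf v) * w m \<ge> 0"
          show ?thesis
          proof (rule ccontr)
            assume "\<not> s * v m + Lf v \<le> 0"
            then have "(s * v m + Lf v) * w m < 0" using w(2) by (intro mult_pos_neg) auto
            then show False using a by simp
          qed
        qed
        then show ?thesis using that by (simp add: field_simps)
      qed
      define lm where "lm = (if S = {} then 0 else max 0 (Sup S))"
      have lm0: "lm \<ge> 0" unfolding lm_def by auto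
      have bddS: "bdd_above S" using bound v0 unfolding bdd_above_def by blast
      have lm_up: "s \<le> lm" if "s \<in> S" for s
        using that bddS cSup_upper[OF that bddS] unfolding lm_def by auto
      have lm_low: "lm \<le> - Lf v / v m" if "v \<in> V" "v m > 0" for v
      proof (cases "S = {}")
        case True
        then show ?thesis using Lpos[OF that] that unfolding lm_def by (simp add: divide_nonpos_pos)
      next
        case False
        have "Sup S \<le> - Lf v / v m" using False bound that by (intro cSup_least) auto
        moreover have "0 \<le> - Lf v / v m" using Lpos[OF that] that by (simp add: divide_nonpos_pos)
        ultimately show ?thesis using False unfolding lm_def by simp
      qed
      define lam' where "lam' = lam(m := lm)"
      have "\<exists>v\<in>V. (\<Sum>i<Suc m. lam' i * v i) > 0"
      proof (rule P[rule_format], intro conjI)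
        show "\<forall>i<Suc m. 0 \<le> lam' i" using lam lm0 unfolding lam'_def by (auto simp: less_Suc_eq)
        show "\<exists>i<Suc m. 0 < lam' i" using lam unfolding lam'_def by auto
      qed
      then obtain v where v: "v \<in> V" "(\<Sum>i<Suc m. lam' i * v i) > 0" by blast
      have "(\<Sum>i<Suc m. lam' i * v i) = Lf v + lm * v m"
        unfolding Lf_def lam'_def by (simp add: sum.lessThan_Suc)
      with v have pos: "Lf v + lm * v m > 0" by simp
      consider "v m > 0" | "v m = 0" | "v m < 0" by linarith
      then show False
      proof cases
        case 1
        then have "lm * v m \<le> - Lf v" using lm_low[OF v(1) 1] by (simp add: field_simps)
        then show False using pos by simp
      next
        case 2
        then have "v \<in> V'" using v unfolding V'_def by auto
        then show False using neg pos 2 unfolding Lf_def by auto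
      next
        case 3
        then have "Lf v / (- v m) \<in> S" unfolding S_def using v by blast
        then have "Lf v / (- v m) \<le> lm" by (rule lm_up)
        then have "Lf v \<le> lm * (- v m)" using 3 by (simp add: field_simps)
        then show False using pos by (simp add: algebra_simps)
      qed
    qed
  qed
  then obtain u where u: "u \<in> cone0 V'" "\<forall>i<m. u i > 0" by blast
  have uV: "u \<in> cone0 V" using cone0_trans[OF u(1) V'sub] .
  have um: "u m \<ge> 0" using cone0_coord[OF u(1) V'nn] .
  define \<epsilon> where "\<epsilon> = Min (insert 1 ((\<lambda>i. u i / (\<bar>v0 i\<bar> + 1)) ` {..<m}))"
  have fin: "finite (insert 1 ((\<lambda>i. u i / (\<bar>v0 i\<bar> + 1)) ` {..<m}))" by auto
  have eps_pos: "\<epsilon> > 0" unfolding \<epsilon>_def using u(2) fin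
    by (subst Min_gr_iff) auto
  have eps_le: "\<epsilon> \<le> u i / (\<bar>v0 i\<bar> + 1)" if "i < m" for i
    unfolding \<epsilon>_def using that fin by (intro Min_le) auto
  have "(\<lambda>i. u i + \<epsilon> * v0 i) \<in> cone0 V" using uV v0 eps_pos by (intro cone0.step) auto
  moreover have "\<forall>i<Suc m. u i + \<epsilon> * v0 i > 0"
  proof (intro allI impI)
    fix i assume "i < Suc m"
    then consider "i < m" | "i = m" by linarith
    then show "u i + \<epsilon> * v0 i > 0"
    proof cases
      case 1
      have "\<epsilon> * (\<bar>v0 i\<bar> + 1) \<le> u i" using eps_le[OF 1] by (simp add: field_simps)
      moreover have "- (\<epsilon> * \<bar>v0 i\<bar>) \<le> \<epsilon> * v0 i" using eps_pos
        by (metis abs_ge_minus_self abs_mult abs_of_pos minus_le_iff)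
      ultimately show ?thesis using eps_pos by (simp add: algebra_simps)
    next
      case 2
      have "\<epsilon> * v0 m > 0" using v0 eps_pos by simp
      then show ?thesis using um 2 by simp
    qed
  qed
  ultimately show ?case by (intro bexI[of _ "\<lambda>i. u i + \<epsilon> * v0 i"]) auto
qed


lemma coh_pos: "coherent_D E \<Longrightarrow> g \<in> E \<Longrightarrow> \<exists>x. g x > 0"
  unfolding coherent_D_def by (meson not_le)

lemma cone0_repr:
  fixes G :: "nat \<Rightarrow> 'b \<Rightarrow> real"
  shows "u \<in> cone0 {(\<lambda>i. G i x) | x. True} \<Longrightarrow>
    \<exists>N c xs. (\<forall>j<N. c j \<ge> (0::real)) \<and> (\<forall>i. u i = (\<Sum>j<(N::nat). c j * G i (xs j)))"
proof (induction u rule: cone0.induct)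
  case zero
  show ?case by (intro exI[of _ 0]) auto
next
  case (step u v d)
  from step.IH obtain N :: nat and c xs where N: "\<forall>j<N. c j \<ge> (0::real)" "\<forall>i. u i = (\<Sum>j<N. c j * G i (xs j))"
    by blast
  from step.hyps(2) obtain x where x: "v = (\<lambda>i. G i x)" by blast
  define c' where "c' = c(N := d)"
  define xs' where "xs' = xs(N := x)"
  have "\<forall>j<Suc N. c' j \<ge> 0" using N step.hyps(3) by (auto simp: c'_def less_Suc_eq)
  moreover have "\<forall>i. u i + d * v i = (\<Sum>j<Suc N. c' j * G i (xs' j))"
  proof
    fix i
    have "(\<Sum>j<N. c' j * G i (xs' j)) = (\<Sum>j<N. c j * G i (xs j))"
      by (intro sum.cong) (auto simp: c'_def xs'_def)
    then show "u i + d * v i = (\<Sum>j<Suc N. c' j * G i (xs' j))"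
      using N x by (simp add: c'_def xs'_def)
  qed
  ultimately show ?case by blast
qed

lemma gordan_E:
  fixes G :: "nat \<Rightarrow> 'b \<Rightarrow> real"
  assumes E: "coherent_D E" and G: "\<forall>i<m. G i \<in> E"
  shows "\<exists>N c xs. (\<forall>j<(N::nat). c j \<ge> (0::real)) \<and> (\<forall>i<m. (\<Sum>j<N. c j * G i (xs j)) > 0)"
proof -
  define V where "V = {(\<lambda>i. G i x) | x. True}"
  have "\<exists>u\<in>cone0 V. \<forall>i<m. u i > 0"
  proof (rule gordan, intro allI impI)
    fix lam :: "nat \<Rightarrow> real" assume lam: "(\<forall>i<m. 0 \<le> lam i) \<and> (\<exists>i<m. 0 < lam i)"
    define I where "I = {i. i < m \<and> lam i > 0}"
    have "finite I" "I \<noteq> {}" using lam unfolding I_def by auto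
    then have inE: "(\<lambda>x. \<Sum>i\<in>I. lam i * G i x) \<in> E"
      using G by (intro coh_sum[OF E]) (auto simp: I_def)
    have eq: "(\<Sum>i\<in>I. lam i * G i x) = (\<Sum>i<m. lam i * G i x)" for x
    proof (rule sum.mono_neutral_left)
      show "\<forall>i\<in>{..<m} - I. lam i * G i x = 0" using lam unfolding I_def
        by (auto simp: order.order_iff_strict)
    qed (auto simp: I_def)
    obtain x where "(\<Sum>i\<in>I. lam i * G i x) > 0" using coh_pos[OF E inE] by blast
    then have "(\<Sum>i<m. lam i * G i x) > 0" using eq by simp
    then show "\<exists>v\<in>V. 0 < (\<Sum>i<m. lam i * v i)" unfolding V_def by auto
  qed
  then obtain u where u: "u \<in> cone0 V" "\<forall>i<m. u i > 0" by blast
  from cone0_repr[OF u(1)[unfolded V_def]] obtain N :: nat and c xs where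
    "\<forall>j<(N::nat). c j \<ge> (0::real)" "\<forall>i. u i = (\<Sum>j<N. c j * G i (xs j))" by blast
  then show ?thesis using u(2) by auto
qed


lemma gamble_diff: "gamble f \<Longrightarrow> gamble g \<Longrightarrow> gamble (\<lambda>x. f x - g x)"
proof -
  assume "gamble f" "gamble g"
  then obtain M K where "\<forall>x. \<bar>f x\<bar> \<le> M" "\<forall>x. \<bar>g x\<bar> \<le> K" unfolding gamble_iff by blast
  then have "\<forall>x. \<bar>f x - g x\<bar> \<le> M + K" by (meson abs_triangle_ineq4 add_mono order_trans)
  then show ?thesis unfolding gamble_iff by blast
qed

lemma core:
  fixes E1 :: "('a \<Rightarrow> real) set" and E2 :: "('b \<Rightarrow> real) set" and h :: "'a \<Rightarrow> real"
  assumes c1: "coherent_D E1" and c2: "coherent_D E2" and B2: "B2 \<noteq> {}" and hg: "gamble h"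
    and mem: "(\<lambda>z. h (fst z) * (if snd z \<in> B2 then 1 else 0)) \<in> indep_prod Bs1 Bs2 E1 E2"
  shows "h \<in> E1 \<or> (\<forall>x. 0 \<le> h x)"
proof -
  from posiD[OF mem[unfolded indep_prod_def extend_D_def]] obtain n :: nat and lam f where
    n: "n \<ge> 1" "\<forall>i<n. lam i > (0::real) \<and> f i \<in> A12 Bs1 E2 \<union> A21 Bs2 E1 \<union> pos_gambles"
    and eq: "(\<lambda>z. h (fst z) * (if snd z \<in> B2 then 1 else 0)) = (\<lambda>z. \<Sum>i<n. lam i * f i z)" by blast
  define \<beta> where "\<beta> = (\<lambda>x::'b. if x \<in> B2 then 1 else (0::real))"
  define p12 where "p12 i = (SOME p. fst p \<in> E2 \<and> f i = (\<lambda>z. fst p (snd z) * (if fst z \<in> snd p then 1 else (0::real))))" for i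
  define p21 where "p21 i = (SOME p. fst p \<in> E1 \<and> f i = (\<lambda>z. fst p (fst z) * (if snd z \<in> snd p then 1 else (0::real))))" for i
  have p12: "fst (p12 i) \<in> E2 \<and> f i = (\<lambda>z. fst (p12 i) (snd z) * (if fst z \<in> snd (p12 i) then 1 else 0))"
    if "f i \<in> A12 Bs1 E2" for i
  proof -
    from that obtain f2 B1 where "f2 \<in> E2" "f i = (\<lambda>z. f2 (snd z) * (if fst z \<in> B1 then 1 else 0))"
      unfolding A12_def by blast
    then have "\<exists>p. fst p \<in> E2 \<and> f i = (\<lambda>z. fst p (snd z) * (if fst z \<in> snd p then 1 else (0::real)))"
      by (intro exI[of _ "(f2, B1)"]) auto
    then show ?thesis unfolding p12_def by (rule someI_ex)
  qed
  have p21: "fst (p21 i) \<in> E1 \<and> f i = (\<lambda>z. fst (p21 i) (fst z) * (if snd z \<in> snd (p21 i) then 1 else 0))"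
    if "f i \<in> A21 Bs2 E1" for i
  proof -
    from that obtain f1 B where "f1 \<in> E1" "f i = (\<lambda>z. f1 (fst z) * (if snd z \<in> B then 1 else 0))"
      unfolding A21_def by blast
    then have "\<exists>p. fst p \<in> E1 \<and> f i = (\<lambda>z. fst p (fst z) * (if snd z \<in> snd p then 1 else (0::real)))"
      by (intro exI[of _ "(f1, B)"]) auto
    then show ?thesis unfolding p21_def by (rule someI_ex)
  qed
  define G where "G i = (if i < n \<and> f i \<in> A12 Bs1 E2 then fst (p12 i) else \<beta>)" for i
  have \<beta>E: "\<beta> \<in> E2"
  proof -
    have "gamble \<beta>" unfolding gamble_iff \<beta>_def by (rule exI[of _ 1]) auto
    moreover have "\<forall>x. 0 \<le> \<beta> x" unfolding \<beta>_def by auto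
    moreover have "\<beta> \<noteq> (\<lambda>x. 0)"
    proof
      assume a: "\<beta> = (\<lambda>x. 0)"
      obtain b where "b \<in> B2" using B2 by auto
      then show False using fun_cong[OF a, of b] unfolding \<beta>_def by simp
    qed
    ultimately show ?thesis by (rule coh_posI[OF c2])
  qed
  have GE: "\<forall>i<Suc n. G i \<in> E2" using p12 \<beta>E unfolding G_def by auto
  from gordan_E[OF c2 GE] obtain N :: nat and c xs where cN: "\<forall>j<N. c j \<ge> 0"
    and cpos: "\<forall>i<Suc n. (\<Sum>j<N. c j * G i (xs j)) > 0" by blast
  define Bt where "Bt = (\<Sum>j<N. c j * \<beta> (xs j))"
  have Bt: "Bt > 0" using cpos[rule_format, of n] unfolding Bt_def G_def by simp
  define d where "d i = (\<Sum>j<N. c j * (if xs j \<in> snd (p21 i) then 1 else 0))" for i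
  have d0: "d i \<ge> 0" for i unfolding d_def using cN by (intro sum_nonneg) auto
  define T where "T = {i. i < n \<and> f i \<notin> A12 Bs1 E2 \<and> f i \<in> A21 Bs2 E1 \<and> d i > 0}"
  define e where "e x = (\<Sum>i\<in>T. (lam i * d i) * fst (p21 i) x)" for x
  define Q where "Q x i = (\<Sum>j<N. c j * f i (x, xs j))" for x i
  have key: "h x * Bt = (\<Sum>i<n. lam i * Q x i)" for x
  proof -
    have "h x * Bt = (\<Sum>j<N. c j * (h x * \<beta> (xs j)))" unfolding Bt_def
      by (simp add: sum_distrib_left algebra_simps)
    also have "\<dots> = (\<Sum>j<N. c j * (\<Sum>i<n. lam i * f i (x, xs j)))"
    proof (intro sum.cong refl)
      fix j
      have "h x * \<beta> (xs j) = (\<Sum>i<n. lam i * f i (x, xs j))"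
        using fun_cong[OF eq, of "(x, xs j)"] unfolding \<beta>_def by simp
      then show "c j * (h x * \<beta> (xs j)) = c j * (\<Sum>i<n. lam i * f i (x, xs j))" by simp
    qed
    also have "\<dots> = (\<Sum>j<N. \<Sum>i<n. lam i * (c j * f i (x, xs j)))"
      by (simp add: sum_distrib_left mult.left_commute)
    also have "\<dots> = (\<Sum>i<n. \<Sum>j<N. lam i * (c j * f i (x, xs j)))"
      by (rule sum.swap)
    also have "\<dots> = (\<Sum>i<n. lam i * Q x i)"
      unfolding Q_def by (simp add: sum_distrib_left)
    finally show ?thesis .
  qed
  have Q21: "Q x i = d i * fst (p21 i) x" if "f i \<in> A21 Bs2 E1" for i x
  proof -
    have "Q x i = (\<Sum>j<N. c j * (fst (p21 i) x * (if xs j \<in> snd (p21 i) then 1 else 0)))"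
      unfolding Q_def using p21[OF that] by simp
    also have "\<dots> = d i * fst (p21 i) x" unfolding d_def sum_distrib_right
      by (intro sum.cong) (auto simp: algebra_simps)
    finally show ?thesis .
  qed
  have Qnn: "Q x i \<ge> 0" if "i < n" "i \<notin> T" for i x
  proof (cases "f i \<in> A12 Bs1 E2")
    case True
    have "Q x i = (\<Sum>j<N. c j * (fst (p12 i) (xs j) * (if x \<in> snd (p12 i) then 1 else 0)))"
      unfolding Q_def using p12[OF True] by simp
    also have "\<dots> = (if x \<in> snd (p12 i) then 1 else 0) * (\<Sum>j<N. c j * G i (xs j))"
      unfolding G_def using True that by (simp add: sum_distrib_left algebra_simps)
    finally show ?thesis using cpos[rule_format, of i] that by simp
  next
    case False
    show ?thesis
    proof (cases "f i \<in> A21 Bs2 E1")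
      case True
      then have "d i = 0" using d0[of i] that False unfolding T_def by auto
      then show ?thesis using Q21[OF True] by simp
    next
      case False2: False
      then have "f i \<in> pos_gambles" using n that False by auto
      then have "\<forall>z. f i z \<ge> 0" unfolding pos_gambles_def by auto
      then show ?thesis unfolding Q_def using cN by (intro sum_nonneg) auto
    qed
  qed
  have ge: "e x \<le> h x * Bt" for x
  proof -
    have Tsub: "T \<subseteq> {..<n}" unfolding T_def by auto
    have "h x * Bt = (\<Sum>i\<in>{..<n} - T. lam i * Q x i) + (\<Sum>i\<in>T. lam i * Q x i)"
      unfolding key using sum.subset_diff[OF Tsub] by simp
    moreover have "(\<Sum>i\<in>{..<n} - T. lam i * Q x i) \<ge> 0"
      using Qnn n by (intro sum_nonneg) (auto intro: mult_nonneg_nonneg less_imp_le)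
    moreover have "(\<Sum>i\<in>T. lam i * Q x i) = e x" unfolding e_def
      by (intro sum.cong refl) (auto simp: Q21 T_def)
    ultimately show ?thesis by simp
  qed
  show ?thesis
  proof (cases "T = {}")
    case True
    then have "\<forall>x. 0 \<le> h x * Bt" using ge unfolding e_def by simp
    then have "\<forall>x. 0 \<le> h x" using Bt by (simp add: zero_le_mult_iff)
    then show ?thesis by blast
  next
    case False
    have Tsub: "T \<subseteq> {..<n}" unfolding T_def by auto
    have finT: "finite T" by (rule finite_subset[OF Tsub finite_lessThan])
    have Tprop: "\<forall>i\<in>T. lam i * d i > 0 \<and> fst (p21 i) \<in> E1"
    proof
      fix i assume iT: "i \<in> T"
      then have i: "i < n" "f i \<in> A21 Bs2 E1" "d i > 0" unfolding T_def by auto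
      have "lam i > 0" using n(2) i(1) by blast
      then show "lam i * d i > 0 \<and> fst (p21 i) \<in> E1" using i(3) p21[OF i(2)] by simp
    qed
    have eE: "e \<in> E1" unfolding e_def[abs_def]
      by (rule coh_sum[OF c1 finT False Tprop])
    define e' where "e' = (\<lambda>x. (1 / Bt) * e x)"
    have e'E: "e' \<in> E1" unfolding e'_def using coh_scaleI[OF c1 eE, of "1/Bt"] Bt by simp
    have hge: "\<forall>x. e' x \<le> h x" unfolding e'_def using ge Bt by (simp add: pos_divide_le_eq)
    show ?thesis
    proof (cases "h = e'")
      case True
      then show ?thesis using e'E by simp
    next
      case False
      define r where "r = (\<lambda>x. h x - e' x)"
      have "gamble e'" by (rule coh_gamble[OF c1 e'E])
      then have "gamble r" unfolding r_def using hg by (rule gamble_diff[rotated])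
      moreover have "\<forall>x. 0 \<le> r x" using hge unfolding r_def by auto
      moreover have "r \<noteq> (\<lambda>x. 0)"
      proof
        assume "r = (\<lambda>x. 0)"
        then have "h = e'"
        proof -
          assume r0: "r = (\<lambda>x. 0)"
          show "h = e'"
          proof
            fix x
            have "r x = 0" using r0 by simp
            then show "h x = e' x" unfolding r_def by simp
          qed
        qed
        then show False using False by simp
      qed
      ultimately have rE: "r \<in> E1" by (rule coh_posI[OF c1])
      have "(\<lambda>x. e' x + r x) \<in> E1" by (rule coh_addI[OF c1 e'E rE])
      moreover have "(\<lambda>x. e' x + r x) = h" unfolding r_def by simp
      ultimately show ?thesis by simp
    qed
  qed
qed


lemma sup_eq:
  fixes A B :: "real set"
  assumes "A \<subseteq> B" "\<forall>\<mu>\<in>B. \<mu> \<in> A \<or> (\<forall>\<mu>'<\<mu>. \<mu>' \<in> A)"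
  shows "Sup (ereal ` B) = Sup (ereal ` A)"
proof (rule antisym)
  show "Sup (ereal ` B) \<le> Sup (ereal ` A)"
  proof (rule Sup_least)
    fix y assume "y \<in> ereal ` B"
    then obtain \<mu> where mu: "\<mu> \<in> B" "y = ereal \<mu>" by blast
    show "y \<le> Sup (ereal ` A)"
    proof (cases "\<mu> \<in> A")
      case True
      then show ?thesis using mu by (simp add: Sup_upper)
    next
      case False
      then have all: "\<forall>\<mu>'<\<mu>. \<mu>' \<in> A" using assms(2) mu by blast
      show ?thesis
      proof (rule ccontr)
        assume "\<not> y \<le> Sup (ereal ` A)"
        then have "Sup (ereal ` A) < ereal \<mu>" using mu by simp
        then obtain r where r: "Sup (ereal ` A) < ereal r" "ereal r < ereal \<mu>"
          using ereal_dense2 by blast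
        then have "r \<in> A" using all by simp
        then have "ereal r \<le> Sup (ereal ` A)" by (simp add: Sup_upper)
        then show False using r by simp
      qed
    qed
  qed
  show "Sup (ereal ` A) \<le> Sup (ereal ` B)" using assms(1) by (intro Sup_subset_mono image_mono)
qed

lemma gamble_cut: "gamble f \<Longrightarrow> gamble (cut f \<mu> B)"
proof -
  assume "gamble f"
  then obtain M where M: "\<forall>x. \<bar>f x\<bar> \<le> M" unfolding gamble_iff by blast
  have "\<forall>x. \<bar>cut f \<mu> B x\<bar> \<le> M + \<bar>\<mu>\<bar>"
  proof
    fix x
    have "\<bar>f x - \<mu>\<bar> \<le> M + \<bar>\<mu>\<bar>" using M by (meson abs_triangle_ineq4 add_mono order_trans order_refl)
    moreover have "0 \<le> M + \<bar>\<mu>\<bar>" using M by (meson abs_ge_zero add_nonneg_nonneg order_trans)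
    ultimately show "\<bar>cut f \<mu> B x\<bar> \<le> M + \<bar>\<mu>\<bar>" unfolding cut_def by auto
  qed
  then show ?thesis unfolding gamble_iff by blast
qed

lemma side:
  fixes E1 :: "('a \<Rightarrow> real) set" and E2 :: "('b \<Rightarrow> real) set"
  assumes c1: "coherent_D E1" and c2: "coherent_D E2" and f1: "gamble f1" and B1: "B1 \<noteq> {}"
    and B2: "B2 \<noteq> {}" "B2 \<in> Bs2 \<union> {UNIV}"
  shows "lp_of (indep_prod Bs1 Bs2 E1 E2) (\<lambda>z. f1 (fst z)) (B1 \<times> B2) = lp_of E1 f1 B1"
proof -
  have cuteq: "cut (\<lambda>z. f1 (fst z)) \<mu> (B1 \<times> B2) = (\<lambda>z. cut f1 \<mu> B1 (fst z) * (if snd z \<in> B2 then 1 else 0))" for \<mu>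
    unfolding cut_def by (auto simp: fun_eq_iff)
  show ?thesis unfolding lp_of_def
  proof (rule sup_eq)
    show "{\<mu>. cut f1 \<mu> B1 \<in> E1} \<subseteq> {\<mu>. cut (\<lambda>z. f1 (fst z)) \<mu> (B1 \<times> B2) \<in> indep_prod Bs1 Bs2 E1 E2}"
    proof
      fix \<mu> assume "\<mu> \<in> {\<mu>. cut f1 \<mu> B1 \<in> E1}"
      then have "(\<lambda>z. cut f1 \<mu> B1 (fst z) * (if snd z \<in> B2 then 1 else 0)) \<in> A21 Bs2 E1"
        unfolding A21_def using B2 by blast
      then show "\<mu> \<in> {\<mu>. cut (\<lambda>z. f1 (fst z)) \<mu> (B1 \<times> B2) \<in> indep_prod Bs1 Bs2 E1 E2}"
        unfolding cuteq indep_prod_def extend_D_def by (auto intro: posi_base)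
    qed
    show "\<forall>\<mu>\<in>{\<mu>. cut (\<lambda>z. f1 (fst z)) \<mu> (B1 \<times> B2) \<in> indep_prod Bs1 Bs2 E1 E2}.
            \<mu> \<in> {\<mu>. cut f1 \<mu> B1 \<in> E1} \<or> (\<forall>\<mu>'<\<mu>. \<mu>' \<in> {\<mu>. cut f1 \<mu> B1 \<in> E1})"
    proof
      fix \<mu> assume "\<mu> \<in> {\<mu>. cut (\<lambda>z. f1 (fst z)) \<mu> (B1 \<times> B2) \<in> indep_prod Bs1 Bs2 E1 E2}"
      then have m: "(\<lambda>z. cut f1 \<mu> B1 (fst z) * (if snd z \<in> B2 then 1 else 0)) \<in> indep_prod Bs1 Bs2 E1 E2"
        unfolding cuteq by simp
      have "cut f1 \<mu> B1 \<in> E1 \<or> (\<forall>x. 0 \<le> cut f1 \<mu> B1 x)"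
        by (rule core[OF c1 c2 B2(1) gamble_cut[OF f1] m])
      moreover have "cut f1 \<mu>' B1 \<in> E1" if nn: "\<forall>x. 0 \<le> cut f1 \<mu> B1 x" and lt: "\<mu>' < \<mu>" for \<mu>'
      proof -
        have "\<forall>x. 0 \<le> cut f1 \<mu>' B1 x"
        proof
          fix x
          show "0 \<le> cut f1 \<mu>' B1 x"
          proof (cases "x \<in> B1")
            case True
            then show ?thesis using nn[rule_format, of x] lt unfolding cut_def by auto
          qed (auto simp: cut_def)
        qed
        moreover have "cut f1 \<mu>' B1 \<noteq> (\<lambda>x. 0)"
        proof
          assume a: "cut f1 \<mu>' B1 = (\<lambda>x. 0)"
          obtain b where b: "b \<in> B1" using B1 by auto
          have "f1 b - \<mu> \<ge> 0" using nn[rule_format, of b] b unfolding cut_def by auto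
          moreover have "f1 b - \<mu>' = 0" using fun_cong[OF a, of b] b unfolding cut_def by auto
          ultimately show False using lt by simp
        qed
        ultimately show ?thesis by (intro coh_posI[OF c1 gamble_cut[OF f1]])
      qed
      ultimately show "\<mu> \<in> {\<mu>. cut f1 \<mu> B1 \<in> E1} \<or> (\<forall>\<mu>'<\<mu>. \<mu>' \<in> {\<mu>. cut f1 \<mu> B1 \<in> E1})"
        by blast
    qed
  qed
qed

lemma swap_gen:
  fixes E1 :: "('a \<Rightarrow> real) set" and E2 :: "('b \<Rightarrow> real) set"
  assumes "g \<in> A12 Bs1 E2 \<union> A21 Bs2 E1 \<union> pos_gambles"
  shows "(\<lambda>w. g (snd w, fst w)) \<in> A12 Bs2 E1 \<union> A21 Bs1 E2 \<union> pos_gambles"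
proof -
  consider "g \<in> A12 Bs1 E2" | "g \<in> A21 Bs2 E1" | "g \<in> pos_gambles" using assms by blast
  then show ?thesis
  proof cases
    case 1
    then obtain f2 B1 where "f2 \<in> E2" "B1 \<in> Bs1 \<union> {UNIV}" "g = (\<lambda>z. f2 (snd z) * (if fst z \<in> B1 then 1 else 0))"
      unfolding A12_def by blast
    then have "(\<lambda>w. g (snd w, fst w)) \<in> A21 Bs1 E2" unfolding A21_def by auto
    then show ?thesis by blast
  next
    case 2
    then obtain f1 B2 where "f1 \<in> E1" "B2 \<in> Bs2 \<union> {UNIV}" "g = (\<lambda>z. f1 (fst z) * (if snd z \<in> B2 then 1 else 0))"
      unfolding A21_def by blast
    then have "(\<lambda>w. g (snd w, fst w)) \<in> A12 Bs2 E1" unfolding A12_def by auto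
    then show ?thesis by blast
  next
    case 3
    then have g: "gamble g" "\<forall>z. g z \<ge> 0" "g \<noteq> (\<lambda>z. 0)" unfolding pos_gambles_def by auto
    from g(1) obtain M where "\<forall>z. \<bar>g z\<bar> \<le> M" unfolding gamble_iff by blast
    then have "gamble (\<lambda>w. g (snd w, fst w))" unfolding gamble_iff by blast
    moreover have "\<forall>w. g (snd w, fst w) \<ge> 0" using g by auto
    moreover have "(\<lambda>w. g (snd w, fst w)) \<noteq> (\<lambda>w. 0)"
    proof
      assume a: "(\<lambda>w. g (snd w, fst w)) = (\<lambda>w. 0)"
      have "g = (\<lambda>z. 0)"
      proof
        fix z
        show "g z = 0" using fun_cong[OF a, of "(snd z, fst z)"] by simp
      qed
      then show False using g by simp
    qed
    ultimately show ?thesis unfolding pos_gambles_def by blast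
  qed
qed

lemma swap_mem:
  fixes E1 :: "('a \<Rightarrow> real) set" and E2 :: "('b \<Rightarrow> real) set"
  assumes "g \<in> indep_prod Bs1 Bs2 E1 E2"
  shows "(\<lambda>w. g (snd w, fst w)) \<in> indep_prod Bs2 Bs1 E2 E1"
proof -
  from posiD[OF assms[unfolded indep_prod_def extend_D_def]] obtain n :: nat and lam f where
    n: "n \<ge> 1" "\<forall>i<n. lam i > (0::real) \<and> f i \<in> A12 Bs1 E2 \<union> A21 Bs2 E1 \<union> pos_gambles"
    and eq: "g = (\<lambda>z. \<Sum>i<n. lam i * f i z)" by blast
  have mem': "\<forall>i<n. lam i > 0 \<and> (\<lambda>w. f i (snd w, fst w)) \<in> A12 Bs2 E1 \<union> A21 Bs1 E2 \<union> pos_gambles"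
    using n(2) swap_gen by blast
  show ?thesis unfolding indep_prod_def extend_D_def
    by (rule posiI[OF n(1) mem']) (simp add: eq)
qed

lemma swap_lp:
  fixes E1 :: "('a \<Rightarrow> real) set" and E2 :: "('b \<Rightarrow> real) set"
  shows "lp_of (indep_prod Bs1 Bs2 E1 E2) (\<lambda>z. f2 (snd z)) (A \<times> B)
       = lp_of (indep_prod Bs2 Bs1 E2 E1) (\<lambda>w. f2 (fst w)) (B \<times> A)"
proof -
  have e1: "(\<lambda>w. cut (\<lambda>z. f2 (snd z)) \<mu> (A \<times> B) (snd w, fst w)) = cut (\<lambda>w. f2 (fst w)) \<mu> (B \<times> A)" for \<mu>
    unfolding cut_def by auto
  have e2: "(\<lambda>z. cut (\<lambda>w. f2 (fst w)) \<mu> (B \<times> A) (snd z, fst z)) = cut (\<lambda>z. f2 (snd z)) \<mu> (A \<times> B)" for \<mu>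
    unfolding cut_def by auto
  have "{\<mu>. cut (\<lambda>z. f2 (snd z)) \<mu> (A \<times> B) \<in> indep_prod Bs1 Bs2 E1 E2}
      = {\<mu>. cut (\<lambda>w. f2 (fst w)) \<mu> (B \<times> A) \<in> indep_prod Bs2 Bs1 E2 E1}"
  proof (intro Collect_cong iffI)
    fix \<mu>
    assume "cut (\<lambda>z. f2 (snd z)) \<mu> (A \<times> B) \<in> indep_prod Bs1 Bs2 E1 E2"
    from swap_mem[OF this] show "cut (\<lambda>w. f2 (fst w)) \<mu> (B \<times> A) \<in> indep_prod Bs2 Bs1 E2 E1"
      unfolding e1 .
  next
    fix \<mu>
    assume "cut (\<lambda>w. f2 (fst w)) \<mu> (B \<times> A) \<in> indep_prod Bs2 Bs1 E2 E1"
    from swap_mem[OF this] show "cut (\<lambda>z. f2 (snd z)) \<mu> (A \<times> B) \<in> indep_prod Bs1 Bs2 E1 E2"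
      unfolding e2 .
  qed
  then show ?thesis unfolding lp_of_def by simp
qed

theorem proposition43:
  fixes Bs1 :: "'a set set" and Bs2 :: "'b set set"
    and C1 :: "(('a \<Rightarrow> real) \<times> 'a set) set" and P1 :: "('a \<Rightarrow> real) \<Rightarrow> 'a set \<Rightarrow> ereal"
    and C2 :: "(('b \<Rightarrow> real) \<times> 'b set) set" and P2 :: "('b \<Rightarrow> real) \<Rightarrow> 'b set \<Rightarrow> ereal"
  assumes "{} \<notin> Bs1" and "{} \<notin> Bs2"
    and "C1 \<subseteq> cond_pairs" and "C2 \<subseteq> cond_pairs"
    and "coherent_lp C1 P1" and "coherent_lp C2 P2"
  shows "(\<forall>f1 B1 B2. gamble f1 \<and> B1 \<noteq> {} \<and> B2 \<in> Bs2 \<longrightarrow>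
            prod_lp Bs1 Bs2 C1 P1 C2 P2 (\<lambda>z. f1 (fst z)) (B1 \<times> B2)
              = prod_lp Bs1 Bs2 C1 P1 C2 P2 (\<lambda>z. f1 (fst z)) (B1 \<times> UNIV)
          \<and> prod_lp Bs1 Bs2 C1 P1 C2 P2 (\<lambda>z. f1 (fst z)) (B1 \<times> UNIV) = nat_ext C1 P1 f1 B1)
       \<and> (\<forall>f2 B2 B1. gamble f2 \<and> B2 \<noteq> {} \<and> B1 \<in> Bs1 \<longrightarrow>
            prod_lp Bs1 Bs2 C1 P1 C2 P2 (\<lambda>z. f2 (snd z)) (B1 \<times> B2)
              = prod_lp Bs1 Bs2 C1 P1 C2 P2 (\<lambda>z. f2 (snd z)) (UNIV \<times> B2)
          \<and> prod_lp Bs1 Bs2 C1 P1 C2 P2 (\<lambda>z. f2 (snd z)) (UNIV \<times> B2) = nat_ext C2 P2 f2 B2)"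
proof -
  have c1: "coherent_D (E_of_lp C1 P1)" by (rule coherent_E[OF assms(5,3)])
  have c2: "coherent_D (E_of_lp C2 P2)" by (rule coherent_E[OF assms(6,4)])
  show ?thesis
  proof (intro conjI allI impI)
    fix f1 :: "'a \<Rightarrow> real" and B1 :: "'a set" and B2 :: "'b set"
    assume h: "gamble f1 \<and> B1 \<noteq> {} \<and> B2 \<in> Bs2"
    then have B2: "B2 \<noteq> {}" using assms(2) by auto
    have s1: "prod_lp Bs1 Bs2 C1 P1 C2 P2 (\<lambda>z. f1 (fst z)) (B1 \<times> B2) = nat_ext C1 P1 f1 B1"
      unfolding prod_lp_def nat_ext_def using h B2 by (intro side[OF c1 c2]) auto
    have s2: "prod_lp Bs1 Bs2 C1 P1 C2 P2 (\<lambda>z. f1 (fst z)) (B1 \<times> UNIV) = nat_ext C1 P1 f1 B1"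
      unfolding prod_lp_def nat_ext_def using h by (intro side[OF c1 c2]) auto
    show "prod_lp Bs1 Bs2 C1 P1 C2 P2 (\<lambda>z. f1 (fst z)) (B1 \<times> B2)
              = prod_lp Bs1 Bs2 C1 P1 C2 P2 (\<lambda>z. f1 (fst z)) (B1 \<times> UNIV)" using s1 s2 by simp
    show "prod_lp Bs1 Bs2 C1 P1 C2 P2 (\<lambda>z. f1 (fst z)) (B1 \<times> UNIV) = nat_ext C1 P1 f1 B1" using s2 .
  next
    fix f2 :: "'b \<Rightarrow> real" and B2 :: "'b set" and B1 :: "'a set"
    assume h: "gamble f2 \<and> B2 \<noteq> {} \<and> B1 \<in> Bs1"
    then have B1: "B1 \<noteq> {}" using assms(1) by auto
    have s1: "prod_lp Bs1 Bs2 C1 P1 C2 P2 (\<lambda>z. f2 (snd z)) (B1 \<times> B2) = nat_ext C2 P2 f2 B2"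
      unfolding prod_lp_def nat_ext_def swap_lp using h B1 by (intro side[OF c2 c1]) auto
    have s2: "prod_lp Bs1 Bs2 C1 P1 C2 P2 (\<lambda>z. f2 (snd z)) (UNIV \<times> B2) = nat_ext C2 P2 f2 B2"
      unfolding prod_lp_def nat_ext_def swap_lp using h by (intro side[OF c2 c1]) auto
    show "prod_lp Bs1 Bs2 C1 P1 C2 P2 (\<lambda>z. f2 (snd z)) (B1 \<times> B2)
              = prod_lp Bs1 Bs2 C1 P1 C2 P2 (\<lambda>z. f2 (snd z)) (UNIV \<times> B2)" using s1 s2 by simp
    show "prod_lp Bs1 Bs2 C1 P1 C2 P2 (\<lambda>z. f2 (snd z)) (UNIV \<times> B2) = nat_ext C2 P2 f2 B2" using s2 .
  qed
qed

end
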